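(* Let $X$ be a finite-dimensional normed space and let $(A_n)_{n\in\mathbb N}$ be a sequence of unbounded connected subsets of $X$. Then either $\bigcap_{n\in\mathbb N}A_n=\emptyset$, or for all but finitely many $k\in\mathbb N$ and every $\varepsilon>0$ there is an infinite subset $N_k\subset\mathbb N$ such that $T_k\cap\bigcap_{n\in N_k}A_n^\varepsilon\neq\emptyset$.
   Context: For a set $A\subset X$ and $\varepsilon>0$, $A^\varepsilon=\{x\in X:\mathrm{dist}(x,A)\le\varepsilon\}$. For $k\in\mathbb N$, $T_k=\{x\in X: k\le\|x\|\le k+1\}$. *)

theory Defs
  imports "HOL-Analysis.Analysis"
begin

definition thick :: "'a::metric_space set \<Rightarrow> real \<Rightarrow> 'a set" where
  "thick A \<epsilon> = {x. infdist x A \<le> \<epsilon>}"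

definition shell :: "nat \<Rightarrow> 'a::real_normed_vector set" where
  "shell k = {x. real k \<le> norm x \<and> norm x \<le> real k + 1}"

end

theory Submission
  imports Defs
begin

lemma span_cball_compact:
  fixes B :: "'a::real_normed_vector set"
  assumes "finite B"
  shows "\<forall>R. compact (span B \<inter> cball 0 R)"
  using assms
proof (induction B rule: finite_induct)
  case empty
  show ?case
  proof
    fix R :: real
    have "span {} \<inter> cball (0::'a) R \<subseteq> {0}" by auto
    then have "finite (span {} \<inter> cball (0::'a) R)" using finite_subset by blast
    then show "compact (span {} \<inter> cball (0::'a) R)" by (rule finite_imp_compact)
  qed
next
  case (insert b B)
  show ?case
  proof (cases "b \<in> span B")
    case True
    then have "span (insert b B) = span B" by (rule span_redundant)
    then show ?thesis using insert.IH by simp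
  next
    case False
    have clB: "closed (span B)"
      unfolding closed_sequential_limits
    proof (intro allI impI)
      fix x l assume h: "(\<forall>n. x n \<in> span B) \<and> x \<longlonglongrightarrow> l"
      then have "bounded (range x)" using convergent_imp_bounded by blast
      then obtain R where R: "\<forall>y\<in>range x. norm y \<le> R" unfolding bounded_iff by blast
      have "\<forall>n. x n \<in> span B \<inter> cball 0 R" using h R by auto
      moreover have "closed (span B \<inter> cball 0 R)"
        using insert.IH compact_imp_closed by blast
      ultimately have "l \<in> span B \<inter> cball 0 R"
        using h closed_sequential_limits by blast
      then show "l \<in> span B" by simp
    qed
    define d where "d = infdist b (span B)"
    have dpos: "d > 0" unfolding d_def
      using infdist_pos_not_in_closed[OF clB _ False] span_zero by blast
    show ?thesis
    proof
      fix R :: real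
      define K where "K = {-R/d..R/d} \<times> (span B \<inter> cball 0 (R + R/d * norm b))"
      define f where "f = (\<lambda>p::real \<times> 'a. fst p *\<^sub>R b + snd p)"
      have cK: "compact K" unfolding K_def
        using insert.IH by (intro compact_Times) auto
      have cf: "continuous_on K f" unfolding f_def by (intro continuous_intros)
      have eq: "span (insert b B) \<inter> cball 0 R = f ` K \<inter> cball 0 R"
      proof
        show "span (insert b B) \<inter> cball 0 R \<subseteq> f ` K \<inter> cball 0 R"
        proof
          fix v assume v: "v \<in> span (insert b B) \<inter> cball 0 R"
          then obtain t where t: "v - t *\<^sub>R b \<in> span B" using span_breakdown_eq by blast
          define z where "z = v - t *\<^sub>R b"
          have nv: "norm v \<le> R" using v by simp
          have tb: "\<bar>t\<bar> * d \<le> norm v"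
          proof (cases "t = 0")
            case True then show ?thesis by simp
          next
            case False
            have "- ((1/t) *\<^sub>R z) \<in> span B" using t z_def by (simp add: span_neg span_scale)
            then have "d \<le> dist b (- ((1/t) *\<^sub>R z))" unfolding d_def by (rule infdist_le)
            also have "dist b (- ((1/t) *\<^sub>R z)) = norm ((1/t) *\<^sub>R v)"
              using False by (simp add: dist_norm z_def algebra_simps)
            also have "\<dots> = norm v / \<bar>t\<bar>" by simp
            finally show ?thesis using False by (simp add: field_simps)
          qed
          have tR: "\<bar>t\<bar> \<le> R/d" using tb nv dpos by (simp add: field_simps)
          have "norm z \<le> norm v + \<bar>t\<bar> * norm b"
            unfolding z_def by (metis norm_scaleR norm_triangle_ineq4)
          also have "\<dots> \<le> R + R/d * norm b"
            using nv tR by (intro add_mono mult_right_mono) auto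
          finally have "(t, z) \<in> K" unfolding K_def using tR t z_def by auto
          moreover have "v = f (t, z)" unfolding f_def z_def by simp
          ultimately show "v \<in> f ` K \<inter> cball 0 R" using v by blast
        qed
      next
        show "f ` K \<inter> cball 0 R \<subseteq> span (insert b B) \<inter> cball 0 R"
        proof
          fix v assume "v \<in> f ` K \<inter> cball 0 R"
          then obtain t z where tz: "(t, z) \<in> K" "v = t *\<^sub>R b + z" "v \<in> cball 0 R"
            unfolding f_def by auto
          then have "v - t *\<^sub>R b \<in> span B" unfolding K_def by auto
          then show "v \<in> span (insert b B) \<inter> cball 0 R"
            using span_breakdown_eq tz by blast
        qed
      qed
      show "compact (span (insert b B) \<inter> cball 0 R)"
        unfolding eq using compact_continuous_image[OF cf cK] by blast
    qed
  qed
qed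

theorem lemma2:
  fixes A :: "nat \<Rightarrow> 'a::real_normed_vector set"
  assumes findim: "\<exists>B. finite B \<and> span B = (UNIV :: 'a set)"
    and unb: "\<And>n. \<not> bounded (A n)"
    and conn: "\<And>n. connected (A n)"
  shows "(\<Inter>n. A n) = {} \<or>
    (\<forall>\<^sub>F k in sequentially. \<forall>\<epsilon>>0. \<exists>N :: nat set. infinite N \<and>
        shell k \<inter> (\<Inter>n\<in>N. thick (A n) \<epsilon>) \<noteq> {})"
proof (cases "(\<Inter>n. A n) = {}")
  case True then show ?thesis by simp
next
  case False
  then obtain x0 where x0: "\<And>n. x0 \<in> A n" by blast
  obtain B :: "'a set" where B: "finite B" "span B = UNIV" using findim by blast
  have cb: "\<And>R. compact (cball (0::'a) R)"
    using span_cball_compact[OF B(1)] B(2) by simp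
  have "\<forall>\<^sub>F k in sequentially. \<forall>\<epsilon>>0. \<exists>N :: nat set. infinite N \<and>
        shell k \<inter> (\<Inter>n\<in>N. thick (A n) \<epsilon>) \<noteq> {}"
  proof (rule eventually_sequentiallyI[of "nat \<lceil>norm x0\<rceil>"])
    fix k assume k: "nat \<lceil>norm x0\<rceil> \<le> k"
    have nx0: "norm x0 \<le> real k" using k by linarith
    show "\<forall>\<epsilon>>0. \<exists>N :: nat set. infinite N \<and> shell k \<inter> (\<Inter>n\<in>N. thick (A n) \<epsilon>) \<noteq> {}"
    proof (intro allI impI)
      fix \<epsilon> :: real assume ep: "\<epsilon> > 0"
      have "\<forall>n. \<exists>y. y \<in> A n \<and> norm y = real k"
      proof
        fix n
        obtain p where p: "p \<in> A n" "norm p > real k"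
          using unb[of n] unfolding bounded_iff by (auto simp: not_le)
        have "connected (norm ` A n)"
          using conn[of n] by (intro connected_continuous_image continuous_intros)
        then have "real k \<in> norm ` A n"
          by (rule connectedD_interval) (use x0 p nx0 in auto)
        then show "\<exists>y. y \<in> A n \<and> norm y = real k" by auto
      qed
      then obtain y where y: "\<And>n. y n \<in> A n" "\<And>n. norm (y n) = real k" by metis
      have "\<forall>n. y n \<in> cball 0 (real k)" using y by simp
      then obtain l r where lr: "l \<in> cball 0 (real k)" "strict_mono (r :: nat \<Rightarrow> nat)"
          "(y \<circ> r) \<longlonglongrightarrow> l"
        by (rule seq_compactE[OF compact_imp_seq_compact[OF cb]]) blast
      have "(\<lambda>n. norm ((y \<circ> r) n)) \<longlonglongrightarrow> norm l" using lr(3) by (rule tendsto_norm)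
      moreover have "(\<lambda>n. norm ((y \<circ> r) n)) = (\<lambda>n. real k)" using y by auto
      ultimately have "(\<lambda>n. real k) \<longlonglongrightarrow> norm l" by simp
      then have nl: "norm l = real k" using LIMSEQ_unique[OF tendsto_const] by metis
      obtain M where M: "\<And>m. m \<ge> M \<Longrightarrow> dist ((y \<circ> r) m) l < \<epsilon>"
        using lr(3) ep unfolding lim_sequentially by blast
      define N where "N = r ` {M..}"
      have "infinite N" unfolding N_def
      proof
        assume "finite (r ` {M..})"
        moreover have "inj_on r {M..}" using lr(2) by (rule strict_mono_imp_inj_on)
        ultimately have "finite {M..}" by (rule finite_imageD)
        then show False using infinite_Ici by blast
      qed
      moreover have "l \<in> shell k \<inter> (\<Inter>n\<in>N. thick (A n) \<epsilon>)"
      proof -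
        have "l \<in> shell k" unfolding shell_def using nl by simp
        moreover have "l \<in> thick (A n) \<epsilon>" if nN: "n \<in> N" for n
        proof -
          obtain m where m: "m \<ge> M" "n = r m" using nN unfolding N_def by auto
          have "infdist l (A n) \<le> dist l (y (r m))" using m y by (simp add: infdist_le)
          also have "\<dots> < \<epsilon>" using M[OF m(1)] by (simp add: dist_commute)
          finally show ?thesis unfolding thick_def by simp
        qed
        ultimately show ?thesis by blast
      qed
      ultimately show "\<exists>N :: nat set. infinite N \<and> shell k \<inter> (\<Inter>n\<in>N. thick (A n) \<epsilon>) \<noteq> {}"
        by blast
    qed
  qed
  then show ?thesis by simp
qed

end
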